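(* There exist absolute constants $q_0$ and $C>0$ such that the following holds. Let $q\geq q_0$ be an integer, let $\delta\in\mathbb{N}$ with $\delta\leq\frac{\log q}{\log 2}$, and let $n\geq\delta q$ be an integer. Let $A:=\frac{1}{n!}\sum_{\pi\in S_n}\bigl(c_1(\pi^q)\bigr)^{\delta}$. Then: if $\delta=1$, $A=\sigma_0(q)$; if $\delta=2$, $A=\sigma_1(q)+\sigma_0(q)^2$; if $\delta=3$, $|A-\sigma_2(q)|\leq C\,\sigma_0(q)\sigma_1(q)$; if $\delta\geq4$, $|A-\sigma_{\delta-1}(q)|\leq C\,q^{\delta-2}\left(\delta\sigma_0(q)+2^{\delta}\right)$.
   Context: For $\pi\in S_n$, $c_1(\pi^q)$ is the number of fixed points (1-cycles) of the permutation $\pi^q$. For real $\alpha$, $\sigma_\alpha(q)=\sum_{d\mid q}d^\alpha$. $\mathbb{N}$ denotes the positive integers. *)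

theory Defs
  imports "HOL-Combinatorics.Permutations" Complex_Main
begin

definition c1 :: "nat \<Rightarrow> (nat \<Rightarrow> nat) \<Rightarrow> nat" where
  "c1 n p = card {i \<in> {..<n}. p i = i}"

definition sigma :: "real \<Rightarrow> nat \<Rightarrow> real" where
  "sigma \<alpha> q = (\<Sum>d\<in>{d. d dvd q}. real d powr \<alpha>)"

definition fixmoment :: "nat \<Rightarrow> nat \<Rightarrow> nat \<Rightarrow> real" where
  "fixmoment n q \<delta> =
     (\<Sum>\<pi>\<in>{p. p permutes {..<n}}. real (c1 n (\<pi> ^^ q)) ^ \<delta>) / fact n"

end

theory Submission
  imports Defs "HOL-Combinatorics.Cycles" "HOL-Combinatorics.Orbits"
begin


lemma cyc_pow:
  assumes "distinct cs" "i < length cs"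
  shows "(cycle_of_list cs ^^ n) (cs ! i) = cs ! ((n + i) mod length cs)"
proof -
  have "map (cycle_of_list cs ^^ n) cs = rotate n cs" using cyclic_rotation[OF assms(1)] .
  hence "map (cycle_of_list cs ^^ n) cs ! i = rotate n cs ! i" by simp
  thus ?thesis using assms(2) by (simp add: nth_rotate)
qed

definition glue :: "'a \<Rightarrow> 'a list \<Rightarrow> ('a \<Rightarrow> 'a) \<Rightarrow> ('a \<Rightarrow> 'a)" where
  "glue x l s = cycle_of_list (x # l) \<circ> s"

lemma glue_pow_in:
  assumes "s permutes V" "V \<inter> set cs = {}" "y \<in> set cs"
  shows "((cycle_of_list cs \<circ> s) ^^ n) y = (cycle_of_list cs ^^ n) y"
proof (induction n)
  case 0 then show ?case by simp
next
  case (Suc n)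
  have "(cycle_of_list cs ^^ n) y \<in> set cs"
    using permutes_funpow[OF cycle_permutes[of cs], of n] assms(3) by (simp add: permutes_in_image)
  hence "s ((cycle_of_list cs ^^ n) y) = (cycle_of_list cs ^^ n) y"
    using assms(1,2) by (meson disjoint_iff permutes_not_in)
  then show ?case using Suc by simp
qed

lemma glue_pow_out:
  assumes "s permutes V" "V \<inter> set cs = {}" "y \<in> V"
  shows "((cycle_of_list cs \<circ> s) ^^ n) y = (s ^^ n) y"
proof (induction n)
  case 0 then show ?case by simp
next
  case (Suc n)
  have "(s ^^ n) y \<in> V"
    using permutes_funpow[OF assms(1), of n] assms(3) by (simp add: permutes_in_image)
  have "s ((s ^^ n) y) \<in> V" using \<open>(s ^^ n) y \<in> V\<close> assms(1) by (simp add: permutes_in_image)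
  hence "cycle_of_list cs (s ((s ^^ n) y)) = s ((s ^^ n) y)"
    by (meson assms(2) disjoint_iff id_outside_supp)
  then show ?case using Suc by simp
qed

lemma glue_orbit_x:
  assumes "distinct (x # l)" "s permutes V" "V \<inter> set (x # l) = {}"
  shows "(glue x l s ^^ n) x = (x # l) ! (n mod length (x # l))"
proof -
  have "(glue x l s ^^ n) x = (cycle_of_list (x # l) ^^ n) ((x # l) ! 0)"
    unfolding glue_def using glue_pow_in[OF assms(2,3), of x n] by simp
  also have "\<dots> = (x # l) ! ((n + 0) mod length (x # l))"
    by (rule cyc_pow[OF assms(1)]) simp
  finally show ?thesis by simp
qed

lemma least_power_glue:
  assumes "distinct (x # l)" "s permutes V" "V \<inter> set (x # l) = {}"
  shows "least_power (glue x l s) x = Suc (length l)"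
  unfolding least_power_def
proof (rule Least_equality)
  show "(glue x l s ^^ Suc (length l)) x = x \<and> 0 < Suc (length l)"
    using glue_orbit_x[OF assms, of "Suc (length l)"] by simp
next
  fix m assume m: "(glue x l s ^^ m) x = x \<and> 0 < m"
  show "Suc (length l) \<le> m"
  proof (rule ccontr)
    assume "\<not> Suc (length l) \<le> m"
    hence lt: "m < length (x # l)" by simp
    have "(x # l) ! m = (x # l) ! 0"
      using glue_orbit_x[OF assms, of m] m lt by simp
    hence "m = 0" using nth_eq_iff_index_eq[OF assms(1) lt, of 0] by simp
    thus False using m by simp
  qed
qed

lemma support_glue:
  assumes "distinct (x # l)" "s permutes V" "V \<inter> set (x # l) = {}"
  shows "support (glue x l s) x = x # l"
proof -
  have "support (glue x l s) x = map (\<lambda>i. (glue x l s ^^ i) x) [0..<length (x # l)]"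
    using least_power_glue[OF assms] by simp
  also have "\<dots> = map (\<lambda>i. (x # l) ! i) [0..<length (x # l)]"
    using glue_orbit_x[OF assms] by (intro map_cong) auto
  also have "\<dots> = x # l" by (rule map_nth)
  finally show ?thesis .
qed

definition Lists :: "'a set \<Rightarrow> 'a \<Rightarrow> 'a list set" where
  "Lists U x = {l. distinct l \<and> set l \<subseteq> U - {x}}"

definition Pairs :: "'a set \<Rightarrow> 'a \<Rightarrow> ('a list \<times> ('a \<Rightarrow> 'a)) set" where
  "Pairs U x = Sigma (Lists U x) (\<lambda>l. {s. s permutes (U - insert x (set l))})"

lemma glue_permutes:
  assumes "x \<in> U" "l \<in> Lists U x" "s permutes (U - insert x (set l))"
  shows "glue x l s permutes U"
proof -
  have "cycle_of_list (x # l) permutes U"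
    using cycle_permutes[of "x # l"] assms(1,2) unfolding Lists_def
    by (auto intro: permutes_subset)
  moreover have "s permutes U" using assms(3) by (auto intro: permutes_subset)
  ultimately show ?thesis unfolding glue_def by (rule permutes_compose[rotated])
qed

lemma glue_bij:
  assumes "finite U" "x \<in> U"
  shows "bij_betw (\<lambda>(l, s). glue x l s) (Pairs U x) {p. p permutes U}"
proof (rule bij_betwI')
  fix a b assume a: "a \<in> Pairs U x" and b: "b \<in> Pairs U x"
  obtain l1 s1 where a': "a = (l1, s1)" by (cases a)
  obtain l2 s2 where b': "b = (l2, s2)" by (cases b)
  have l1: "distinct (x # l1)" "s1 permutes (U - insert x (set l1))"
       "(U - insert x (set l1)) \<inter> set (x # l1) = {}"
    using a a' unfolding Pairs_def Lists_def by auto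
  have l2: "distinct (x # l2)" "s2 permutes (U - insert x (set l2))"
       "(U - insert x (set l2)) \<inter> set (x # l2) = {}"
    using b b' unfolding Pairs_def Lists_def by auto
  show "((\<lambda>(l, s). glue x l s) a = (\<lambda>(l, s). glue x l s) b) = (a = b)"
  proof
    assume eq: "(\<lambda>(l, s). glue x l s) a = (\<lambda>(l, s). glue x l s) b"
    hence g: "glue x l1 s1 = glue x l2 s2" using a' b' by simp
    hence "x # l1 = x # l2" using support_glue[OF l1] support_glue[OF l2] by metis
    hence ll: "l1 = l2" by simp
    have "inj (cycle_of_list (x # l1))"
      using permutation_bijective[OF permutation_of_cycle] bij_is_inj by blast
    hence "s1 = s2" using g ll unfolding glue_def by (auto simp: fun_eq_iff inj_eq)
    thus "a = b" using a' b' ll by simp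
  qed simp
next
  fix a assume "a \<in> Pairs U x"
  then show "(\<lambda>(l, s). glue x l s) a \<in> {p. p permutes U}"
    using glue_permutes[OF assms(2)] unfolding Pairs_def by auto
next
  fix p assume "p \<in> {p. p permutes U}"
  hence p: "p permutes U" by simp
  have perm: "permutation p" using p assms(1) permutation_permutes by blast
  define k where "k = least_power p x"
  have k: "(p ^^ k) x = x" "k > 0" using least_power_of_permutation[OF perm] k_def by auto
  define l where "l = map (\<lambda>i. (p ^^ i) x) [1..<k]"
  have cs: "support p x = x # l"
    using k(2) unfolding l_def k_def[symmetric] by (simp add: upt_conv_Cons map_Suc_upt[symmetric])
  have dist: "distinct (x # l)" using cycle_of_permutation[OF perm, of x] cs by simp
  have len: "length (x # l) = k" unfolding l_def using k(2) by simp
  have nth: "(x # l) ! i = (p ^^ i) x" if "i < k" for i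
    using that cs[symmetric] unfolding k_def by simp
  have inU: "(p ^^ i) x \<in> U" for i
    using permutes_funpow[OF p, of i] assms(2) by (simp add: permutes_in_image)
  have setU: "set (x # l) \<subseteq> U" using inU assms(2) unfolding l_def by auto
  have setO: "set (x # l) = orbit p x"
  proof
    show "set (x # l) \<subseteq> orbit p x"
    proof
      fix y assume "y \<in> set (x # l)"
      then obtain i where i: "i < k" "y = (p ^^ i) x" using nth len by (metis in_set_conv_nth)
      show "y \<in> orbit p x"
      proof (cases "i = 0")
        case True then show ?thesis using k i by (auto simp: orbit_altdef intro!: exI[of _ k])
      next
        case False then show ?thesis using i by (auto simp: orbit_altdef)
      qed
    qed
  next
    show "orbit p x \<subseteq> set (x # l)"
    proof
      fix y assume "y \<in> orbit p x"
      then obtain n where "y = (p ^^ n) x" by (auto simp: orbit_altdef)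
      hence "y = (p ^^ (n mod k)) x" using funpow_mod_eq[OF k(1), of n] by simp
      moreover have "n mod k < k" using k(2) by simp
      ultimately show "y \<in> set (x # l)" using nth len by (metis nth_mem)
    qed
  qed
  have cyc: "cyclic_on p (set (x # l))" using setO cyclic_on_orbit[OF p assms(1)] by simp
  define s where "s = perm_restrict p (U - insert x (set l))"
  have sperm: "s permutes (U - insert x (set l))"
    using perm_restrict_diff_cyclic[OF p cyc] unfolding s_def by simp
  have lL: "l \<in> Lists U x" using dist setU unfolding Lists_def by auto
  have "glue x l s = p"
  proof
    fix y
    show "glue x l s y = p y"
    proof (cases "y \<in> set (x # l)")
      case True
      then obtain i where i: "i < k" "y = (x # l) ! i" using len by (metis in_set_conv_nth)
      have sy: "s y = y" unfolding s_def using True by (simp add: perm_restrict_def)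
      have "cycle_of_list (x # l) y = (x # l) ! ((1 + i) mod k)"
        using cyc_pow[OF dist, of i 1] i len by simp
      also have "\<dots> = p y"
      proof (cases "Suc i < k")
        case True then show ?thesis using nth[of "Suc i"] nth[of i] i by simp
      next
        case False
        hence "Suc i = k" using i by simp
        hence e: "(p ^^ Suc i) x = x" using k(1) by simp
        have "y = (p ^^ i) x" using nth[of i] i by simp
        hence "p y = (p ^^ Suc i) x" by simp
        thus ?thesis using e \<open>Suc i = k\<close> by simp
      qed
      finally show ?thesis unfolding glue_def using sy by simp
    next
      case False
      show ?thesis
      proof (cases "y \<in> U")
        case True
        have "p y \<notin> set (x # l)" using False cyclic_on_f_in[OF p cyc] by blast
        moreover have "s y = p y" unfolding s_def using True False by (simp add: perm_restrict_def)
        ultimately show ?thesis unfolding glue_def by (simp add: id_outside_supp)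
      next
        case nU: False
        have "s y = y" unfolding s_def using nU by (simp add: perm_restrict_def)
        moreover have "p y = y" using p nU by (simp add: permutes_not_in)
        ultimately show ?thesis unfolding glue_def using False by (simp add: id_outside_supp)
      qed
    qed
  qed
  moreover have "(l, s) \<in> Pairs U x" unfolding Pairs_def using lL sperm by simp
  ultimately show "\<exists>a\<in>Pairs U x. p = (\<lambda>(l, s). glue x l s) a" by force
qed

definition Xf :: "nat \<Rightarrow> 'a set \<Rightarrow> ('a \<Rightarrow> 'a) \<Rightarrow> nat" where
  "Xf q U p = card {y \<in> U. (p ^^ q) y = y}"

lemma mod_shift_iff:
  fixes i k q :: nat
  assumes "i < k"
  shows "((q + i) mod k = i) \<longleftrightarrow> k dvd q"
proof
  assume h: "(q + i) mod k = i"
  have "((q + i) div k) * k + (q + i) mod k = q + i" by (rule div_mult_mod_eq)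
  hence "q = ((q + i) div k) * k" using h by simp
  hence "q = k * ((q + i) div k)" by (simp only: mult.commute)
  thus "k dvd q" by (rule dvdI)
next
  assume "k dvd q"
  hence "q mod k = 0" by (simp add: dvd_eq_mod_eq_0)
  hence "(q + i) mod k = (0 + i) mod k" by (metis mod_add_left_eq)
  thus "(q + i) mod k = i" using assms by simp
qed

lemma Xf_glue:
  assumes "finite U" "x \<in> U" "l \<in> Lists U x" "s permutes (U - insert x (set l))"
  shows "Xf q U (glue x l s) = (if Suc (length l) dvd q then Suc (length l) else 0)
           + Xf q (U - insert x (set l)) s"
proof -
  define V where "V = U - insert x (set l)"
  define cs where "cs = x # l"
  have dist: "distinct cs" and sub: "set cs \<subseteq> U" using assms(2,3) unfolding Lists_def cs_def by auto
  have disj: "V \<inter> set cs = {}" unfolding V_def cs_def by auto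
  have sV: "s permutes V" using assms(4) V_def by simp
  have split: "{y \<in> U. (glue x l s ^^ q) y = y} =
      {y \<in> set cs. (glue x l s ^^ q) y = y} \<union> {y \<in> V. (s ^^ q) y = y}"
  proof -
    have eqV: "\<forall>y\<in>V. (glue x l s ^^ q) y = (s ^^ q) y"
    proof
      fix y assume yV: "y \<in> V"
      show "(glue x l s ^^ q) y = (s ^^ q) y"
        using glue_pow_out[OF sV disj yV, of q] unfolding glue_def cs_def by simp
    qed
    have "U = set cs \<union> V" using sub unfolding V_def cs_def by auto
    show ?thesis
    proof (intro set_eqI)
      fix y show "y \<in> {y \<in> U. (glue x l s ^^ q) y = y} \<longleftrightarrow>
        y \<in> {y \<in> set cs. (glue x l s ^^ q) y = y} \<union> {y \<in> V. (s ^^ q) y = y}"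
      proof (cases "y \<in> V")
        case True thus ?thesis using eqV \<open>U = set cs \<union> V\<close> by auto
      next
        case False thus ?thesis using \<open>U = set cs \<union> V\<close> by auto
      qed
    qed
  qed
  have in_cs: "{y \<in> set cs. (glue x l s ^^ q) y = y} = (if Suc (length l) dvd q then set cs else {})"
  proof -
    have "(glue x l s ^^ q) y = y \<longleftrightarrow> Suc (length l) dvd q" if ycs: "y \<in> set cs" for y
    proof -
      obtain i where i: "i < length cs" "y = cs ! i" using ycs[unfolded in_set_conv_nth] by auto
      have "(glue x l s ^^ q) y = cs ! ((q + i) mod length cs)"
        using glue_pow_in[OF sV disj ycs, of q] cyc_pow[OF dist i(1), of q] i(2)
        unfolding glue_def cs_def by simp
      moreover have jlt: "(q + i) mod length cs < length cs" using i(1) by (intro mod_less_divisor) (cases cs, auto)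
      moreover have "cs ! ((q + i) mod length cs) = cs ! i \<longleftrightarrow> (q + i) mod length cs = i"
        by (rule nth_eq_iff_index_eq[OF dist jlt i(1)])
      ultimately have "(glue x l s ^^ q) y = y \<longleftrightarrow> (q + i) mod length cs = i"
        using i(2) by simp
      also have "\<dots> \<longleftrightarrow> length cs dvd q" by (rule mod_shift_iff[OF i(1)])
      finally show ?thesis unfolding cs_def by simp
    qed
    thus ?thesis by auto
  qed
  have fin: "finite V" using assms(1) V_def by simp
  have "Xf q U (glue x l s) = card ({y \<in> set cs. (glue x l s ^^ q) y = y} \<union> {y \<in> V. (s ^^ q) y = y})"
    unfolding Xf_def using split by simp
  also have "\<dots> = card {y \<in> set cs. (glue x l s ^^ q) y = y} + card {y \<in> V. (s ^^ q) y = y}"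
    by (rule card_Un_disjoint) (use fin disj in auto)
  also have "card {y \<in> set cs. (glue x l s ^^ q) y = y} = (if Suc (length l) dvd q then Suc (length l) else 0)"
    unfolding in_cs using distinct_card[OF dist] cs_def by simp
  finally show ?thesis unfolding Xf_def V_def by simp
qed

lemma glue_fix_x:
  assumes "x \<in> U" "l \<in> Lists U x" "s permutes (U - insert x (set l))"
  shows "(glue x l s ^^ q) x = x \<longleftrightarrow> Suc (length l) dvd q"
proof -
  have dist: "distinct (x # l)" using assms unfolding Lists_def by auto
  have disj: "(U - insert x (set l)) \<inter> set (x # l) = {}" by auto
  have "(glue x l s ^^ q) x = (x # l) ! (q mod length (x # l))" by (rule glue_orbit_x[OF dist assms(3) disj])
  moreover have "q mod length (x # l) < length (x # l)" by simp
  moreover have "(x # l) ! (q mod length (x # l)) = (x # l) ! 0 \<longleftrightarrow> q mod length (x # l) = 0"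
    by (rule nth_eq_iff_index_eq[OF dist]) auto
  ultimately have "(glue x l s ^^ q) x = x \<longleftrightarrow> q mod length (x # l) = 0"
    by simp
  thus ?thesis by (simp add: dvd_eq_mod_eq_0)
qed

lemma finite_Lists: "finite U \<Longrightarrow> finite (Lists U x)"
proof -
  assume f: "finite U"
  have "Lists U x \<subseteq> {l. set l \<subseteq> U \<and> length l \<le> card U}"
    unfolding Lists_def using f by (auto simp: distinct_card[symmetric] intro!: card_mono)
  thus ?thesis using finite_lists_length_le[OF f] by (rule finite_subset)
qed

lemma sum_step:
  fixes f :: "nat \<Rightarrow> real"
  assumes "finite U" "x \<in> U"
  shows "(\<Sum>p\<in>{p. p permutes U}. if (p ^^ q) x = x then f (Xf q U p) else 0) =
    (\<Sum>l\<in>Lists U x. if Suc (length l) dvd q then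
        (\<Sum>s\<in>{s. s permutes (U - insert x (set l))}. f (Suc (length l) + Xf q (U - insert x (set l)) s)) else 0)"
proof -
  let ?F = "\<lambda>p. if (p ^^ q) x = x then f (Xf q U p) else 0"
  have "(\<Sum>p\<in>{p. p permutes U}. ?F p) = (\<Sum>a\<in>Pairs U x. ?F ((\<lambda>(l, s). glue x l s) a))"
    by (rule sum.reindex_bij_betw[OF glue_bij[OF assms], symmetric])
  also have "\<dots> = (\<Sum>l\<in>Lists U x. \<Sum>s\<in>{s. s permutes (U - insert x (set l))}. ?F (glue x l s))"
    unfolding Pairs_def
    by (subst sum.Sigma) (auto simp: finite_Lists assms finite_permutations intro!: sum.cong split: prod.splits)
  also have "\<dots> = (\<Sum>l\<in>Lists U x. if Suc (length l) dvd q then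
        (\<Sum>s\<in>{s. s permutes (U - insert x (set l))}. f (Suc (length l) + Xf q (U - insert x (set l)) s)) else 0)"
  proof (rule sum.cong[OF refl])
    fix l assume l: "l \<in> Lists U x"
    show "(\<Sum>s\<in>{s. s permutes (U - insert x (set l))}. ?F (glue x l s)) = (if Suc (length l) dvd q then
        (\<Sum>s\<in>{s. s permutes (U - insert x (set l))}. f (Suc (length l) + Xf q (U - insert x (set l)) s)) else 0)"
      using glue_fix_x[OF assms(2) l] Xf_glue[OF assms l] by (auto intro!: sum.cong)
  qed
  finally show ?thesis .
qed



definition sg :: "nat \<Rightarrow> nat \<Rightarrow> real" where
  "sg q m = (\<Sum>d\<in>{d. d dvd q}. real d ^ m)"

fun Mq :: "nat \<Rightarrow> nat \<Rightarrow> real" where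
  "Mq q 0 = 1"
| "Mq q (Suc k) = (\<Sum>j\<le>k. real (k choose j) * sg q (k - j) * Mq q j)"

lemma card_lists_fact:
  assumes "finite A" "m \<le> card A"
  shows "real (card {xs. length xs = m \<and> distinct xs \<and> set xs \<subseteq> A}) * fact (card A - m) = fact (card A)"
proof -
  define N where "N = card A"
  have c: "card {xs. length xs = m \<and> distinct xs \<and> set xs \<subseteq> A} = \<Prod>{N - m + 1..N}"
    unfolding N_def by (rule card_lists_distinct_length_eq[OF assms])
  have f: "(fact N :: nat) = fact (N - m) * \<Prod>{Suc (N - m)..N}"
    by (rule fact_eq_fact_times) (rule diff_le_self)
  have "(fact N :: nat) = card {xs. length xs = m \<and> distinct xs \<and> set xs \<subseteq> A} * fact (N - m)"
    unfolding c f Suc_eq_plus1 by (rule mult.commute)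
  hence "(of_nat (fact N) :: real) = of_nat (card {xs. length xs = m \<and> distinct xs \<and> set xs \<subseteq> A} * fact (N - m))"
    by (rule arg_cong)
  thus ?thesis unfolding of_nat_mult of_nat_fact N_def by simp
qed

lemma sum_divisors_shift:
  fixes F :: "nat \<Rightarrow> real"
  assumes "q > 0" "q \<le> n"
  shows "(\<Sum>m<n. if Suc m dvd q then F (Suc m) else 0) = (\<Sum>d\<in>{d. d dvd q}. F d)"
proof -
  have "{d. d dvd q} = Suc ` {m \<in> {..<n}. Suc m dvd q}"
  proof (intro set_eqI iffI)
    fix d assume "d \<in> {d. d dvd q}"
    hence d: "d dvd q" by simp
    have "d \<noteq> 0" using d assms(1) by (cases "d = 0") auto
    moreover have "d \<le> q" by (rule dvd_imp_le[OF d assms(1)])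
    ultimately have e: "d = Suc (d - 1)" "d - 1 < n" using assms(2) by auto
    show "d \<in> Suc ` {m \<in> {..<n}. Suc m dvd q}"
      by (rule image_eqI[of _ _ "d - 1"]) (use e d in auto)
  qed auto
  hence "(\<Sum>d\<in>{d. d dvd q}. F d) = (\<Sum>m\<in>{m \<in> {..<n}. Suc m dvd q}. F (Suc m))"
    by (simp add: sum.reindex)
  also have "\<dots> = (\<Sum>m<n. if Suc m dvd q then F (Suc m) else 0)"
    by (rule sum.inter_filter) simp
  finally show ?thesis by simp
qed



lemma real_card_filter:
  assumes "finite U"
  shows "real (card {y \<in> U. P y}) = (\<Sum>y\<in>U. if P y then 1 else 0)"
proof -
  have "real (card {y \<in> U. P y}) = (\<Sum>y\<in>{y \<in> U. P y}. 1)" by simp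
  also have "\<dots> = (\<Sum>y\<in>U. if P y then 1 else 0)" by (rule sum.inter_filter[OF assms])
  finally show ?thesis .
qed

lemma inner_binom:
  fixes S :: "('a \<Rightarrow> 'a) set" and X :: "('a \<Rightarrow> 'a) \<Rightarrow> nat"
  shows "(\<Sum>s\<in>S. real (d + X s) ^ k) = (\<Sum>j\<le>k. real (k choose j) * real d ^ (k - j) * (\<Sum>s\<in>S. real (X s) ^ j))"
proof -
  have "(\<Sum>s\<in>S. real (d + X s) ^ k) = (\<Sum>s\<in>S. \<Sum>j\<le>k. real (k choose j) * real (X s) ^ j * real d ^ (k - j))"
    by (intro sum.cong refl) (simp only: of_nat_add add.commute[of "real d"] binomial_ring)
  also have "\<dots> = (\<Sum>j\<le>k. \<Sum>s\<in>S. real (k choose j) * real (X s) ^ j * real d ^ (k - j))"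
    by (rule sum.swap)
  also have "\<dots> = (\<Sum>j\<le>k. real (k choose j) * real d ^ (k - j) * (\<Sum>s\<in>S. real (X s) ^ j))"
    by (intro sum.cong refl) (simp add: sum_distrib_left sum_distrib_right mult_ac)
  finally show ?thesis .
qed

lemma moment:
  assumes q: "q > 0"
  shows "finite U \<Longrightarrow> k * q \<le> card U \<Longrightarrow>
    (\<Sum>p\<in>{p. p permutes U}. real (Xf q U p) ^ k) = fact (card U) * Mq q k"
proof (induction k arbitrary: U rule: less_induct)
  case (less k)
  show ?case
  proof (cases k)
    case 0
    have "card {p. p permutes U} = fact (card U)" by (rule card_permutations[OF refl less.prems(1)])
    thus ?thesis using 0 by (simp add: of_nat_fact)
  next
    case (Suc k')
    define n where "n = card U"
    have fin: "finite U" using less.prems(1) .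
    have nq: "q \<le> n" using less.prems(2) Suc unfolding n_def by simp
    hence n0: "n > 0" using q by simp
    define G where "G d = (\<Sum>j\<le>k'. real (k' choose j) * real d ^ (k' - j) * Mq q j)" for d
    have inner: "(\<Sum>l\<in>Lists U x. if Suc (length l) dvd q then
        (\<Sum>s\<in>{s. s permutes (U - insert x (set l))}. real (Suc (length l) + Xf q (U - insert x (set l)) s) ^ k') else 0)
        = fact (n - 1) * (\<Sum>d\<in>{d. d dvd q}. G d)" if x: "x \<in> U" for x
    proof -
      define H where "H m = (if Suc m dvd q then fact (n - Suc m) * G (Suc m) else (0::real))" for m
      have eqH: "(if Suc (length l) dvd q then
        (\<Sum>s\<in>{s. s permutes (U - insert x (set l))}. real (Suc (length l) + Xf q (U - insert x (set l)) s) ^ k') else 0)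
         = H (length l)" if l: "l \<in> Lists U x" for l
      proof (cases "Suc (length l) dvd q")
        case True
        define V where "V = U - insert x (set l)"
        have dist: "distinct (x # l)" and sub: "set (x # l) \<subseteq> U" using l x unfolding Lists_def by auto
        have cV: "card V = n - Suc (length l)"
        proof -
          have "card V = card U - card (set (x # l))" unfolding V_def
            using card_Diff_subset[OF finite_subset[OF sub fin] sub] by simp
          thus ?thesis using distinct_card[OF dist] n_def by simp
        qed
        have dq: "Suc (length l) \<le> q" using True q by (simp add: dvd_imp_le)
        have IH: "(\<Sum>s\<in>{s. s permutes V}. real (Xf q V s) ^ j) = fact (card V) * Mq q j" if j: "j \<le> k'" for j
        proof (rule less.IH)
          show "j < k" using j Suc by simp
          show "finite V" using fin V_def by simp
          have "j * q \<le> k' * q" using j by simp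
          also have "\<dots> \<le> n - Suc (length l)" using less.prems(2) Suc dq unfolding n_def by simp
          finally show "j * q \<le> card V" using cV by simp
        qed
        have "(\<Sum>s\<in>{s. s permutes V}. real (Suc (length l) + Xf q V s) ^ k')
            = (\<Sum>j\<le>k'. real (k' choose j) * real (Suc (length l)) ^ (k' - j) * (\<Sum>s\<in>{s. s permutes V}. real (Xf q V s) ^ j))"
          by (rule inner_binom)
        also have "\<dots> = (\<Sum>j\<le>k'. real (k' choose j) * real (Suc (length l)) ^ (k' - j) * (fact (card V) * Mq q j))"
          using IH by (intro sum.cong refl) simp
        also have "\<dots> = fact (card V) * G (Suc (length l))"
          unfolding G_def by (simp add: sum_distrib_left mult_ac)
        finally show ?thesis using True unfolding H_def V_def[symmetric] cV by simp
      next
        case False thus ?thesis unfolding H_def by simp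
      qed
      have "(\<Sum>l\<in>Lists U x. if Suc (length l) dvd q then
        (\<Sum>s\<in>{s. s permutes (U - insert x (set l))}. real (Suc (length l) + Xf q (U - insert x (set l)) s) ^ k') else 0)
        = (\<Sum>l\<in>Lists U x. H (length l))" using eqH by (rule sum.cong[OF refl])
      also have "\<dots> = (\<Sum>m\<in>{..<n}. \<Sum>l\<in>{l \<in> Lists U x. length l = m}. H (length l))"
      proof (rule sum.group[symmetric])
        show "finite (Lists U x)" by (rule finite_Lists[OF fin])
        show "finite {..<n}" by simp
        show "length ` Lists U x \<subseteq> {..<n}"
        proof
          fix m assume "m \<in> length ` Lists U x"
          then obtain l where l: "l \<in> Lists U x" "m = length l" by auto
          have "set (x # l) \<subseteq> U" "distinct (x # l)" using l x unfolding Lists_def by auto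
          hence "length (x # l) \<le> n" unfolding n_def using fin
            by (metis card_mono distinct_card)
          thus "m \<in> {..<n}" using l by simp
        qed
      qed
      also have "\<dots> = (\<Sum>m<n. if Suc m dvd q then fact (n - 1) * G (Suc m) else 0)"
      proof (rule sum.cong[OF refl])
        fix m assume m: "m \<in> {..<n}"
        have setEq: "{l \<in> Lists U x. length l = m} = {xs. length xs = m \<and> distinct xs \<and> set xs \<subseteq> U - {x}}"
          unfolding Lists_def by auto
        have "(\<Sum>l\<in>{l \<in> Lists U x. length l = m}. H (length l)) = (\<Sum>l\<in>{l \<in> Lists U x. length l = m}. H m)"
          by (rule sum.cong) auto
        also have "\<dots> = real (card {l \<in> Lists U x. length l = m}) * H m" by simp
        finally have e: "(\<Sum>l\<in>{l \<in> Lists U x. length l = m}. H (length l)) =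
            real (card {xs. length xs = m \<and> distinct xs \<and> set xs \<subseteq> U - {x}}) * H m"
          unfolding setEq .
        have cU: "card (U - {x}) = n - 1" using x fin n_def by simp
        have "real (card {xs. length xs = m \<and> distinct xs \<and> set xs \<subseteq> U - {x}}) * fact (card (U - {x}) - m) = fact (card (U - {x}))"
          by (rule card_lists_fact) (use fin m cU in auto)
        hence cl: "real (card {xs. length xs = m \<and> distinct xs \<and> set xs \<subseteq> U - {x}}) * fact (n - Suc m) = fact (n - 1)"
          using cU by simp
        show "(\<Sum>l\<in>{l \<in> Lists U x. length l = m}. H (length l)) = (if Suc m dvd q then fact (n - 1) * G (Suc m) else 0)"
          unfolding e H_def using cl setEq by (simp add: mult.assoc[symmetric])
      qed
      also have "\<dots> = (\<Sum>d\<in>{d. d dvd q}. fact (n - 1) * G d)"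
        by (rule sum_divisors_shift[OF q nq])
      finally show ?thesis by (simp add: sum_distrib_left)
    qed
    have "(\<Sum>p\<in>{p. p permutes U}. real (Xf q U p) ^ k)
        = (\<Sum>p\<in>{p. p permutes U}. \<Sum>x\<in>U. if (p ^^ q) x = x then real (Xf q U p) ^ k' else 0)"
    proof (rule sum.cong[OF refl])
      fix p
      define c where "c = real (Xf q U p)"
      have e: "c = (\<Sum>x\<in>U. if (p ^^ q) x = x then 1 else 0)"
        unfolding c_def Xf_def by (rule real_card_filter[OF fin])
      have "c ^ k = c ^ k' * (\<Sum>x\<in>U. if (p ^^ q) x = x then 1 else 0)"
        by (subst e[symmetric]) (simp add: Suc)
      also have "\<dots> = (\<Sum>x\<in>U. if (p ^^ q) x = x then c ^ k' else 0)"
        unfolding sum_distrib_left by (intro sum.cong refl) simp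
      finally show "real (Xf q U p) ^ k = (\<Sum>x\<in>U. if (p ^^ q) x = x then real (Xf q U p) ^ k' else 0)"
        unfolding c_def .
    qed
    also have "\<dots> = (\<Sum>x\<in>U. \<Sum>p\<in>{p. p permutes U}. if (p ^^ q) x = x then real (Xf q U p) ^ k' else 0)"
      by (rule sum.swap)
    also have "\<dots> = (\<Sum>x\<in>U. fact (n - 1) * (\<Sum>d\<in>{d. d dvd q}. G d))"
    proof (rule sum.cong[OF refl])
      fix x assume x: "x \<in> U"
      show "(\<Sum>p\<in>{p. p permutes U}. if (p ^^ q) x = x then real (Xf q U p) ^ k' else 0) = fact (n - 1) * (\<Sum>d\<in>{d. d dvd q}. G d)"
        using sum_step[OF fin x, of q "\<lambda>m. real m ^ k'"] inner[OF x] by simp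
    qed
    also have "\<dots> = real n * fact (n - 1) * (\<Sum>d\<in>{d. d dvd q}. G d)" using n_def by simp
    also have "real n * fact (n - 1) = (fact n :: real)" using n0 by (metis fact_num_eq_if less_not_refl2)
    also have "(\<Sum>d\<in>{d. d dvd q}. G d) = Mq q k"
    proof -
      have "(\<Sum>d\<in>{d. d dvd q}. G d) = (\<Sum>j\<le>k'. \<Sum>d\<in>{d. d dvd q}. real (k' choose j) * real d ^ (k' - j) * Mq q j)"
        unfolding G_def by (rule sum.swap)
      also have "\<dots> = (\<Sum>j\<le>k'. real (k' choose j) * sg q (k' - j) * Mq q j)"
        unfolding sg_def by (intro sum.cong refl) (simp add: sum_distrib_left sum_distrib_right mult_ac)
      finally show ?thesis using Suc by simp
    qed
    finally show ?thesis unfolding n_def .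
  qed
qed



lemma div_div_dvd:
  fixes d q :: nat
  assumes "d dvd q" "q > 0"
  shows "q div (q div d) = d"
proof -
  obtain e where e: "q = d * e" using assms(1) by (rule dvdE)
  have "d > 0" "e > 0" using e assms(2) by auto
  thus ?thesis using e by simp
qed

lemma sum_div_reindex:
  fixes f :: "nat \<Rightarrow> real"
  assumes "q > 0"
  shows "(\<Sum>d\<in>{d. d dvd q}. f d) = (\<Sum>d\<in>{d. d dvd q}. f (q div d))"
proof (rule sum.reindex_bij_witness[of _ "\<lambda>d. q div d" "\<lambda>d. q div d"])
  fix d assume "d \<in> {d. d dvd q}"
  hence d: "d dvd q" by simp
  show "q div (q div d) = d" by (rule div_div_dvd[OF d assms])
  show "q div d \<in> {d. d dvd q}" using d by (auto intro: div_dvd_div[of d q q, simplified] simp: dvd_div_iff_mult)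
qed (use assms div_div_dvd in auto)

lemma sg_alt:
  assumes "q > 0"
  shows "sg q m = real q ^ m * (\<Sum>d\<in>{d. d dvd q}. (1 / real d) ^ m)"
proof -
  have "sg q m = (\<Sum>d\<in>{d. d dvd q}. real (q div d) ^ m)"
    unfolding sg_def by (rule sum_div_reindex[OF assms])
  also have "\<dots> = (\<Sum>d\<in>{d. d dvd q}. real q ^ m * (1 / real d) ^ m)"
    by (intro sum.cong refl) (simp add: real_of_nat_div power_divide)
  finally show ?thesis by (simp add: sum_distrib_left)
qed

lemma basel_le: "n \<ge> 1 \<Longrightarrow> (\<Sum>d\<in>{1..n}. (1 / real d) ^ 2) \<le> 2 - 1 / real n"
proof (induction n rule: dec_induct)
  case base then show ?case by simp
next
  case (step n)
  have "(\<Sum>d\<in>{1..Suc n}. (1 / real d) ^ 2) = (\<Sum>d\<in>{1..n}. (1 / real d) ^ 2) + (1 / real (Suc n)) ^ 2"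
    by simp
  also have "\<dots> \<le> 2 - 1 / real n + (1 / real (Suc n)) ^ 2" using step by simp
  also have "\<dots> \<le> 2 - 1 / real (Suc n)"
  proof -
    have n: "real n \<ge> 1" using step by simp
    have e1: "1 / real n - 1 / real (Suc n) = 1 / (real n * real (Suc n))"
      using n by (simp add: field_simps)
    have e2: "(1 / real (Suc n)) ^ 2 = 1 / (real (Suc n) * real (Suc n))"
      by (simp add: power2_eq_square)
    have "1 / (real (Suc n) * real (Suc n)) \<le> 1 / (real n * real (Suc n))"
      using n by (intro divide_left_mono mult_right_mono) auto
    hence "(1 / real (Suc n)) ^ 2 \<le> 1 / real n - 1 / real (Suc n)"
      using e1 e2 by simp
    thus ?thesis by simp
  qed
  finally show ?case .
qed

lemma divisors_sub: "(q::nat) > 0 \<Longrightarrow> {d. d dvd q} \<subseteq> {1..q}"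
proof
  fix x assume q: "q > 0" and "x \<in> {d. d dvd q}"
  hence x: "x dvd q" by simp
  have "x \<noteq> 0"
  proof
    assume "x = 0" hence "q = 0" using x dvd_0_left by metis
    thus False using q by simp
  qed
  moreover have "x \<le> q" by (rule dvd_imp_le[OF x q])
  ultimately show "x \<in> {1..q}" by simp
qed

lemma inv_sq_sum_le:
  assumes "q > 0"
  shows "(\<Sum>d\<in>{d. d dvd q}. (1 / real d) ^ 2) \<le> 2"
proof -
  have "(\<Sum>d\<in>{d. d dvd q}. (1 / real d) ^ 2) \<le> (\<Sum>d\<in>{1..q}. (1 / real d) ^ 2)"
    by (rule sum_mono2[OF _ divisors_sub[OF assms]]) auto
  also have "\<dots> \<le> 2 - 1 / real q" by (rule basel_le) (use assms in simp)
  also have "\<dots> \<le> 2" by simp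
  finally show ?thesis .
qed

lemma sg_le:
  assumes "q > 0" "m \<ge> 2"
  shows "sg q m \<le> 2 * real q ^ m"
proof -
  have "(\<Sum>d\<in>{d. d dvd q}. (1 / real d) ^ m) \<le> (\<Sum>d\<in>{d. d dvd q}. (1 / real d) ^ 2)"
  proof (rule sum_mono)
    fix d assume "d \<in> {d. d dvd q}"
    hence "d \<ge> 1" using divisors_sub[OF assms(1)] by auto
    hence "0 \<le> 1 / real d" "1 / real d \<le> 1" by auto
    thus "(1 / real d) ^ m \<le> (1 / real d) ^ 2" by (intro power_decreasing assms(2))
  qed
  also have "\<dots> \<le> 2" by (rule inv_sq_sum_le[OF assms(1)])
  finally have "(\<Sum>d\<in>{d. d dvd q}. (1 / real d) ^ m) \<le> 2" .
  hence "real q ^ m * (\<Sum>d\<in>{d. d dvd q}. (1 / real d) ^ m) \<le> real q ^ m * 2"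
    by (rule mult_left_mono) simp
  thus ?thesis using sg_alt[OF assms(1), of m] by simp
qed

lemma sg0: "sg q 0 = real (card {d. d dvd q})"
  unfolding sg_def by simp

lemma sg_nonneg: "sg q m \<ge> 0"
  unfolding sg_def by (rule sum_nonneg) simp

lemma sg1_ge: "q > 0 \<Longrightarrow> sg q 1 \<ge> real q"
proof -
  assume q: "q > 0"
  have "real q = (\<Sum>d\<in>{q}. real d ^ 1)" by simp
  also have "\<dots> \<le> sg q 1" unfolding sg_def
    by (rule sum_mono2) (use q in auto)
  finally show ?thesis .
qed

lemma t_ge1: "q > 0 \<Longrightarrow> sg q 0 \<ge> 1"
proof -
  assume q: "q > 0"
  have "card {d. d dvd q} \<ge> 1" using q by (metis One_nat_def Suc_leI card_gt_0_iff dvd_refl empty_iff finite_divisors_nat mem_Collect_eq)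
  thus ?thesis by (simp add: sg0)
qed

lemma sg1_le_qt:
  assumes "q > 0"
  shows "sg q 1 \<le> real q * sg q 0"
proof -
  have "(\<Sum>d\<in>{d. d dvd q}. (1 / real d) ^ 1) \<le> (\<Sum>d\<in>{d. d dvd q}. 1)"
  proof (rule sum_mono)
    fix d assume "d \<in> {d. d dvd q}"
    hence "d \<ge> 1" using divisors_sub[OF assms(1)] by auto
    thus "(1 / real d) ^ 1 \<le> 1" by simp
  qed
  hence "real q ^ 1 * (\<Sum>d\<in>{d. d dvd q}. (1 / real d) ^ 1) \<le> real q * sg q 0"
    by (simp add: sg0 mult_left_mono)
  thus ?thesis using sg_alt[OF assms, of 1] by simp
qed

lemma cauchy_card:
  fixes a :: "nat \<Rightarrow> real"
  assumes "finite A"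
  shows "(\<Sum>x\<in>A. a x) ^ 2 \<le> real (card A) * (\<Sum>x\<in>A. a x ^ 2)"
proof -
  have "(\<Sum>x\<in>A. a x) ^ 2 = (\<Sum>x\<in>A. \<Sum>y\<in>A. a x * a y)"
    by (simp add: power2_eq_square sum_product)
  also have "\<dots> \<le> (\<Sum>x\<in>A. \<Sum>y\<in>A. (a x ^ 2 + a y ^ 2) / 2)"
  proof (intro sum_mono)
    fix x y
    have "0 \<le> (a x - a y) ^ 2" by simp
    thus "a x * a y \<le> (a x ^ 2 + a y ^ 2) / 2" by (simp add: power2_eq_square algebra_simps)
  qed
  also have "\<dots> = (\<Sum>x\<in>A. \<Sum>y\<in>A. a x ^ 2 / 2) + (\<Sum>x\<in>A. \<Sum>y\<in>A. a y ^ 2 / 2)"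
    by (simp add: add_divide_distrib sum.distrib)
  also have "(\<Sum>x\<in>A. \<Sum>y\<in>A. a y ^ 2 / 2) = (\<Sum>y\<in>A. \<Sum>x\<in>A. a y ^ 2 / 2)" by (rule sum.swap)
  also have "(\<Sum>x\<in>A. \<Sum>y\<in>A. a x ^ 2 / 2) + (\<Sum>y\<in>A. \<Sum>x\<in>A. a y ^ 2 / 2) = real (card A) * (\<Sum>x\<in>A. a x ^ 2)"
    by (simp add: sum_distrib_left)
  finally show ?thesis .
qed

lemma sg1_sq:
  assumes "q > 0"
  shows "sg q 1 ^ 2 \<le> 2 * sg q 0 * real q ^ 2"
proof -
  have "(\<Sum>d\<in>{d. d dvd q}. (1 / real d)) ^ 2 \<le> real (card {d. d dvd q}) * (\<Sum>d\<in>{d. d dvd q}. (1 / real d) ^ 2)"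
    by (rule cauchy_card) (use assms in simp)
  also have "\<dots> \<le> real (card {d. d dvd q}) * 2"
    by (rule mult_left_mono[OF inv_sq_sum_le[OF assms]]) simp
  finally have *: "(\<Sum>d\<in>{d. d dvd q}. (1 / real d)) ^ 2 \<le> 2 * sg q 0" by (simp add: sg0)
  have "sg q 1 ^ 2 = real q ^ 2 * (\<Sum>d\<in>{d. d dvd q}. (1 / real d)) ^ 2"
    using sg_alt[OF assms, of 1] by (simp add: power_mult_distrib)
  also have "\<dots> \<le> real q ^ 2 * (2 * sg q 0)" by (rule mult_left_mono[OF *]) simp
  finally have "sg q 1 ^ 2 \<le> real q ^ 2 * (2 * sg q 0)" .
  thus ?thesis by (simp add: algebra_simps)
qed



lemma divisor_count_sq:
  fixes q :: nat
  assumes q: "q > 0"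
  shows "(card {d. d dvd q}) ^ 2 \<le> 4 * q"
proof -
  define D where "D = {d. d dvd q}"
  define D1 where "D1 = {d \<in> D. d * d \<le> q}"
  define D2 where "D2 = {d \<in> D. \<not> d * d \<le> q}"
  have finD: "finite D" unfolding D_def using q by simp
  have f1: "finite D1" "finite D2" unfolding D1_def D2_def using finD by auto
  have cD: "card D = card D1 + card D2"
  proof -
    have "D = D1 \<union> D2" "D1 \<inter> D2 = {}" unfolding D1_def D2_def by auto
    thus ?thesis using f1 card_Un_disjoint by simp
  qed
  have c21: "card D2 \<le> card D1"
  proof (rule card_inj_on_le[of "\<lambda>d. q div d"])
    show "inj_on (\<lambda>d. q div d) D2"
    proof (rule inj_onI)
      fix a b assume "a \<in> D2" "b \<in> D2" "q div a = q div b"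
      hence "q div (q div a) = q div (q div b)" by simp
      moreover have "q div (q div a) = a" using \<open>a \<in> D2\<close> div_div_dvd[OF _ q] unfolding D2_def D_def by simp
      moreover have "q div (q div b) = b" using \<open>b \<in> D2\<close> div_div_dvd[OF _ q] unfolding D2_def D_def by simp
      ultimately show "a = b" by simp
    qed
    show "(\<lambda>d. q div d) ` D2 \<subseteq> D1"
    proof
      fix e assume "e \<in> (\<lambda>d. q div d) ` D2"
      then obtain d where d: "d \<in> D2" "e = q div d" by auto
      hence dq: "d dvd q" "q < d * d" unfolding D2_def D_def by auto
      obtain c where c: "q = d * c" using dq(1) by (rule dvdE)
      have dpos: "d > 0" using c q by (cases d) auto
      have ec: "e = c" using d(2) c dpos by simp
      have "d * c < d * d" using dq(2) c by simp
      hence "c < d" using dpos by simp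
      hence "c * c \<le> d * c" by simp
      hence "e * e \<le> q" using ec c by (simp add: mult.commute)
      moreover have "e dvd q" using c ec by simp
      ultimately show "e \<in> D1" unfolding D1_def D_def by simp
    qed
    show "finite D1" by (rule f1(1))
  qed
  have "1 \<in> D1" unfolding D1_def D_def using q by simp
  define a where "a = Max D1"
  have aD1: "a \<in> D1" unfolding a_def using f1(1) \<open>1 \<in> D1\<close> by (intro Max_in) auto
  have "D1 \<subseteq> {1..a}"
  proof
    fix d assume d: "d \<in> D1"
    hence "d \<le> a" unfolding a_def using f1(1) by simp
    moreover have "d \<ge> 1" using d divisors_sub[OF q] unfolding D1_def D_def by auto
    ultimately show "d \<in> {1..a}" by simp
  qed
  hence "card D1 \<le> a" using card_mono[of "{1..a}" D1] by simp
  moreover have "a * a \<le> q" using aD1 unfolding D1_def by simp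
  ultimately have "card D1 * card D1 \<le> q" using mult_le_mono[of "card D1" a "card D1" a] by linarith
  have "card D \<le> 2 * card D1" using cD c21 by simp
  hence "(card D) ^ 2 \<le> (2 * card D1) ^ 2" by (rule power_mono) simp
  also have "\<dots> = 4 * (card D1 * card D1)" by (simp add: power2_eq_square)
  also have "\<dots> \<le> 4 * q" using \<open>card D1 * card D1 \<le> q\<close> by simp
  finally show ?thesis unfolding D_def .
qed

lemma t_sq: "q > 0 \<Longrightarrow> sg q 0 ^ 2 \<le> 4 * real q"
proof -
  assume q: "q > 0"
  have "real ((card {d. d dvd q}) ^ 2) \<le> real (4 * q)"
    using divisor_count_sq[OF q] by (simp only: of_nat_le_iff)
  thus ?thesis by (simp add: sg0)
qed

lemma t_le_q: "q \<ge> 4 \<Longrightarrow> sg q 0 \<le> real q"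
proof -
  assume q: "q \<ge> 4"
  have "sg q 0 ^ 2 \<le> 4 * real q" using t_sq q by simp
  also have "\<dots> \<le> real q ^ 2" using q by (simp add: power2_eq_square)
  finally have "sg q 0 ^ 2 \<le> real q ^ 2" .
  thus ?thesis by (rule power2_le_imp_le) simp
qed

lemma Mq_nonneg: "Mq q k \<ge> 0"
proof (induction k rule: less_induct)
  case (less k)
  show ?case
  proof (cases k)
    case 0 then show ?thesis by simp
  next
    case (Suc k')
    show ?thesis unfolding Suc Mq.simps
      by (rule sum_nonneg) (use less Suc sg_nonneg in auto)
  qed
qed

lemma Mq_split:
  assumes "m \<ge> 1"
  shows "Mq q m = sg q (m - 1) + (\<Sum>j\<in>{1..m-1}. real ((m - 1) choose j) * sg q (m - 1 - j) * Mq q j)"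
proof -
  obtain k where k: "m = Suc k" using assms by (cases m) auto
  have "Mq q m = (\<Sum>j\<in>{0..k}. real (k choose j) * sg q (k - j) * Mq q j)"
    unfolding k by (simp add: atMost_atLeast0)
  also have "\<dots> = real (k choose 0) * sg q (k - 0) * Mq q 0 + (\<Sum>j\<in>{Suc 0..k}. real (k choose j) * sg q (k - j) * Mq q j)"
    by (rule sum.atLeast_Suc_atMost) simp
  finally show ?thesis unfolding k by simp
qed

lemma Mq1: "Mq q 1 = sg q 0"
  by simp

lemma Mq2: "Mq q 2 = sg q 1 + sg q 0 ^ 2"
  by (simp add: numeral_2_eq_2 power2_eq_square)

lemma Mq3: "Mq q 3 = sg q 2 + 3 * sg q 1 * sg q 0 + sg q 0 ^ 3"
proof -
  have "Mq q 3 = Mq q (Suc 2)" by simp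
  also have "\<dots> = (\<Sum>j\<le>2. real (2 choose j) * sg q (2 - j) * Mq q j)" by (rule Mq.simps(2))
  also have "\<dots> = sg q 2 + 2 * sg q 1 * Mq q 1 + sg q 0 * Mq q 2"
    by (simp add: numeral_2_eq_2)
  finally show ?thesis using Mq2 Mq1 by (simp add: algebra_simps power2_eq_square power3_eq_cube)
qed



lemma cube_le: "(m::nat) \<ge> 4 \<Longrightarrow> m ^ 3 \<le> 4 * 2 ^ m"
proof (induction m rule: dec_induct)
  case base then show ?case by simp
next
  case (step m)
  have "4 * m^2 \<le> m^3" using step(1) by (simp add: power3_eq_cube power2_eq_square)
  moreover have "4 * m \<le> m^2" using step(1) by (simp add: power2_eq_square)
  ultimately have "3*m^2 + 3*m + 1 \<le> m^3" using step(1) by linarith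
  moreover have "(Suc m) ^ 3 = m^3 + (3*m^2 + 3*m + 1)" by (simp add: power3_eq_cube power2_eq_square algebra_simps)
  ultimately have "(Suc m) ^ 3 \<le> 2 * m ^ 3" by linarith
  also have "\<dots> \<le> 4 * 2 ^ Suc m" using step(3) by simp
  finally show ?case .
qed

lemma sq_le: "(m::nat) \<ge> 4 \<Longrightarrow> m ^ 2 \<le> 2 ^ m"
proof (induction m rule: dec_induct)
  case base then show ?case by simp
next
  case (step m)
  have "(Suc m) ^ 2 = m^2 + 2*m + 1" by (simp add: power2_eq_square)
  also have "\<dots> \<le> 2 * m ^ 2"
  proof -
    have "4 * m \<le> m^2" using step(1) by (simp add: power2_eq_square)
    hence "2 * m + 1 \<le> m^2" using step(1) by linarith
    thus ?thesis by simp
  qed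
  also have "\<dots> \<le> 2 ^ Suc m" using step(3) by simp
  finally show ?case .
qed

lemma big_le: "(m::nat) \<ge> 16 \<Longrightarrow> 256 * m ^ 2 \<le> 2 ^ m"
proof (induction m rule: dec_induct)
  case base then show ?case by simp
next
  case (step m)
  have "(Suc m) ^ 2 = m^2 + 2*m + 1" by (simp add: power2_eq_square)
  also have "\<dots> \<le> 2 * m ^ 2"
  proof -
    have "4 * m \<le> m^2" using step(1) by (simp add: power2_eq_square)
    hence "2 * m + 1 \<le> m^2" using step(1) by linarith
    thus ?thesis by simp
  qed
  finally have "256 * (Suc m) ^ 2 \<le> 2 * (256 * m ^ 2)" by simp
  also have "\<dots> \<le> 2 ^ Suc m" using step(3) by simp
  finally show ?case .
qed

lemma L_lemma:
  assumes q: "q > 0" and m: "m \<ge> 4"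
  shows "real m ^ 2 * sg q 1 \<le> real q * (real m * sg q 0 + 8 * 2 ^ m)"
proof -
  define t where "t = sg q 0"
  define s where "s = sg q 1"
  define Q where "Q = real q"
  have Q0: "Q > 0" using q Q_def by simp
  have t0: "t \<ge> 0" unfolding t_def by (rule sg_nonneg)
  have s0: "s \<ge> 0" unfolding s_def by (rule sg_nonneg)
  have ss: "s ^ 2 \<le> 2 * t * Q ^ 2" using sg1_sq[OF q] unfolding s_def t_def Q_def .
  have c3: "real m ^ 3 \<le> 4 * 2 ^ m"
  proof -
    have "real (m ^ 3) \<le> real (4 * 2 ^ m)" using cube_le[OF m] by (simp only: of_nat_le_iff)
    thus ?thesis by simp
  qed
  have main: "real m ^ 2 * s \<le> Q * (real m * t + 8 * 2 ^ m)"
  proof (cases "real m * s \<le> Q * t")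
    case True
    have "real m ^ 2 * s = real m * (real m * s)" by (simp add: power2_eq_square)
    also have "\<dots> \<le> real m * (Q * t)" using True by (simp add: mult_left_mono)
    also have "\<dots> \<le> Q * (real m * t + 8 * 2 ^ m)" using Q0 by (simp add: algebra_simps)
    finally show ?thesis .
  next
    case False
    hence lt: "Q * t < real m * s" by simp
    have "Q * t \<ge> 0" using Q0 t0 by simp
    hence "real m * s > 0" using lt by linarith
    hence spos: "s > 0" using s0 by (cases "s = 0") auto
    have "s * s \<le> 2 * Q * (Q * t)" using ss by (simp add: power2_eq_square algebra_simps)
    also have "\<dots> \<le> 2 * Q * (real m * s)" using lt Q0 by (simp add: mult_left_mono)
    finally have "s * s \<le> (2 * Q * real m) * s" by (simp add: algebra_simps)
    hence sl: "s \<le> 2 * Q * real m" using spos by simp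
    have "real m ^ 2 * s \<le> real m ^ 2 * (2 * Q * real m)" using sl by (simp add: mult_left_mono)
    also have "\<dots> = 2 * Q * real m ^ 3" by (simp add: power2_eq_square power3_eq_cube)
    also have "\<dots> \<le> 2 * Q * (4 * 2 ^ m)" using c3 Q0 by (simp add: mult_left_mono)
    also have "\<dots> \<le> Q * (real m * t + 8 * 2 ^ m)" using Q0 t0 by (simp add: algebra_simps)
    finally show ?thesis .
  qed
  thus ?thesis unfolding s_def t_def Q_def .
qed

lemma jt_small:
  assumes q: "q > 0" and j: "256 * j ^ 2 \<le> q"
  shows "8 * real j * sg q 0 \<le> real q"
proof -
  have t0: "sg q 0 \<ge> 0" by (rule sg_nonneg)
  have jq: "256 * real j ^ 2 \<le> real q"
  proof -
    have "real (256 * j ^ 2) \<le> real q" using j by (simp only: of_nat_le_iff)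
    thus ?thesis by simp
  qed
  have "(8 * real j * sg q 0) ^ 2 = 64 * real j ^ 2 * sg q 0 ^ 2" by (simp add: power_mult_distrib)
  also have "\<dots> \<le> 64 * real j ^ 2 * (4 * real q)" by (rule mult_left_mono[OF t_sq[OF q]]) simp
  also have "\<dots> = (256 * real j ^ 2) * real q" by simp
  also have "\<dots> \<le> real q * real q" using jq by (simp add: mult_right_mono)
  also have "\<dots> = real q ^ 2" by (simp add: power2_eq_square)
  finally show ?thesis by (rule power2_le_imp_le) simp
qed

lemma M3_le: "q \<ge> 4 \<Longrightarrow> Mq q 3 \<le> 18 * real q ^ 2"
proof -
  assume q4: "q \<ge> 4"
  hence q: "q > 0" by simp
  define t where "t = sg q 0"
  define Q where "Q = real q"
  have t0: "t \<ge> 0" unfolding t_def by (rule sg_nonneg)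
  have tt: "t ^ 2 \<le> 4 * Q" using t_sq[OF q] unfolding t_def Q_def .
  have tq: "t \<le> Q" using t_le_q[OF q4] unfolding t_def Q_def .
  have s1: "sg q 1 \<le> Q * t" using sg1_le_qt[OF q] unfolding t_def Q_def .
  have s2: "sg q 2 \<le> 2 * Q ^ 2" using sg_le[OF q, of 2] unfolding Q_def by simp
  have a: "sg q 1 * t \<le> Q * t * t" using s1 t0 by (simp add: mult_right_mono)
  have b: "Q * t * t \<le> 4 * Q ^ 2" using tt q Q_def by (simp add: power2_eq_square mult_left_mono mult.assoc[symmetric])
  have c: "t ^ 3 \<le> 4 * Q ^ 2"
  proof -
    have "t ^ 3 = t * t ^ 2" by (simp add: power3_eq_cube power2_eq_square)
    also have "\<dots> \<le> t * (4 * Q)" using tt t0 by (simp add: mult_left_mono)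
    also have "\<dots> \<le> Q * (4 * Q)" using tq Q_def by (simp add: mult_right_mono)
    finally show ?thesis by (simp add: power2_eq_square)
  qed
  have "Mq q 3 = sg q 2 + 3 * (sg q 1 * t) + t ^ 3" using Mq3 unfolding t_def by simp
  thus ?thesis unfolding Q_def[symmetric] using s2 a b c by linarith
qed



lemma E_bound:
  assumes q: "q > 0"
  shows "4 \<le> m \<Longrightarrow> 2 ^ m \<le> q \<Longrightarrow> 256 * m ^ 2 \<le> q \<Longrightarrow>
    Mq q m - sg q (m - 1) \<le> 100 * real q ^ (m - 2) * (real m * sg q 0 + 2 ^ m)"
proof (induction m rule: less_induct)
  case (less m)
  define t where "t = sg q 0"
  define Q where "Q = real q"
  have m4: "m \<ge> 4" using less.prems(1) .
  have "(16::nat) \<le> 2 ^ m"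
  proof -
    have "(2::nat) ^ 4 \<le> 2 ^ m" using m4 by (intro power_increasing) auto
    thus ?thesis by simp
  qed
  hence "16 \<le> q" using less.prems(2) by (rule order.trans)
  hence q4: "q \<ge> 4" by simp
  have Q1: "Q \<ge> 1" using q Q_def by simp
  have t0: "t \<ge> 0" unfolding t_def by (rule sg_nonneg)
  have tt: "t ^ 2 \<le> 4 * Q" using t_sq[OF q] unfolding t_def Q_def .
  have tq: "t \<le> Q" using t_le_q[OF q4] unfolding t_def Q_def .
  have s1: "sg q 1 \<le> Q * t" using sg1_le_qt[OF q] unfolding t_def Q_def .
  have s10: "sg q 1 \<ge> 0" by (rule sg_nonneg)
  have ss: "sg q 1 ^ 2 \<le> 2 * t * Q ^ 2" using sg1_sq[OF q] unfolding t_def Q_def .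
  have sgle: "sg q k \<le> 2 * Q ^ k" if "k \<ge> 2" for k using sg_le[OF q that] unfolding Q_def .
  define T where "T j = real ((m - 1) choose j) * sg q (m - 1 - j) * Mq q j" for j
  have Esum: "Mq q m - sg q (m - 1) = (\<Sum>j\<in>{1..m-1}. T j)"
    using Mq_split[of m q] m4 unfolding T_def by simp
  have Mbnd: "Mq q j \<le> 65 * Q ^ (j - 1)" if j3: "3 \<le> j" and jm: "j < m" for j
  proof (cases "j = 3")
    case True
    have h: "Mq q 3 \<le> 18 * real q ^ 2" by (rule M3_le[OF q4])
    have "18 * real q ^ 2 \<le> 65 * real q ^ 2" by simp
    hence "Mq q 3 \<le> 65 * real q ^ 2" using h by linarith
    thus ?thesis using True unfolding Q_def by simp
  next
    case False
    hence j4: "4 \<le> j" using j3 by simp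
    have "(2::nat) ^ j \<le> 2 ^ m" using jm by (intro power_increasing) auto
    hence j2: "2 ^ j \<le> q" using less.prems(2) by (rule order.trans)
    have "256 * j ^ 2 \<le> 256 * m ^ 2" using jm by (simp add: power_mono)
    hence j256: "256 * j ^ 2 \<le> q" using less.prems(3) by (rule order.trans)
    have IH: "Mq q j - sg q (j - 1) \<le> 100 * real q ^ (j - 2) * (real j * sg q 0 + 2 ^ j)"
      by (rule less.IH[OF jm j4 j2 j256])
    have a: "8 * real j * t \<le> Q" using jt_small[OF q j256] unfolding t_def Q_def .
    have "(2::nat) ^ Suc j \<le> 2 ^ m" using jm by (intro power_increasing) auto
    hence "2 ^ Suc j \<le> q" using less.prems(2) by (rule order.trans)
    hence "real (2 ^ Suc j) \<le> Q" unfolding Q_def by (simp only: of_nat_le_iff)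
    hence b: "2 * 2 ^ j \<le> Q" by simp
    have c: "sg q (j - 1) \<le> 2 * Q ^ (j - 1)" using sgle j4 by simp
    have jj: "j - 1 = Suc (j - 2)" using j4 by simp
    have pw: "Q ^ (j - 1) = Q ^ (j - 2) * Q" unfolding jj by (rule power_Suc2)
    have d: "real j * t + 2 ^ j \<le> Q * (5 / 8)" using a b by simp
    have "100 * Q ^ (j - 2) * (real j * t + 2 ^ j) \<le> 100 * Q ^ (j - 2) * (Q * (5 / 8))"
      using d Q1 by (intro mult_left_mono) auto
    also have "\<dots> = 62.5 * Q ^ (j - 1)" using pw by simp
    finally have "100 * Q ^ (j - 2) * (real j * t + 2 ^ j) \<le> 62.5 * Q ^ (j - 1)" .
    moreover have IH': "Mq q j - sg q (j - 1) \<le> 100 * Q ^ (j - 2) * (real j * t + 2 ^ j)"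
      using IH unfolding t_def Q_def .
    moreover have "Q ^ (j - 1) \<ge> 0" using Q1 by simp
    ultimately show ?thesis using c by linarith
  qed
  show ?case
  proof (cases "m = 4")
    case True
    have set: "{1..m-1} = {1, 2, 3}" using True by auto
    have c31: "(3::nat) choose 1 = 3" by simp
    have c32: "(3::nat) choose 2 = 3" by (simp add: numeral_3_eq_3 numeral_2_eq_2)
    have T1: "T 1 = 3 * sg q 2 * t" unfolding T_def t_def using True c31 by simp
    have T2: "T 2 = 3 * sg q 1 * (sg q 1 + t ^ 2)" unfolding T_def t_def using True c32 Mq2 by simp
    have T3: "T 3 = t * Mq q 3" unfolding T_def t_def using True by simp
    have "(\<Sum>j\<in>{1..m-1}. T j) = T 1 + T 2 + T 3" unfolding set by simp
    also have "\<dots> \<le> 42 * Q ^ 2 * t"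
    proof -
      have a: "3 * sg q 2 * t \<le> 6 * Q ^ 2 * t" using sgle[of 2] t0 by (simp add: mult_right_mono)
      have b1: "sg q 1 * t ^ 2 \<le> sg q 1 * (4 * Q)" using tt s10 by (simp add: mult_left_mono)
      have b2: "sg q 1 * (4 * Q) \<le> (Q * t) * (4 * Q)" using s1 Q1 by (simp add: mult_right_mono)
      have b: "3 * sg q 1 * (sg q 1 + t ^ 2) \<le> 18 * Q ^ 2 * t"
        using ss b1 b2 by (simp add: algebra_simps power2_eq_square)
      have c: "t * Mq q 3 \<le> t * (18 * Q ^ 2)" using M3_le[OF q4] t0 unfolding Q_def by (simp add: mult_left_mono)
      show ?thesis using T1 T2 T3 a b c by (simp add: algebra_simps)
    qed
    also have "\<dots> \<le> 100 * Q ^ (m - 2) * (real m * t + 2 ^ m)"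
      using True t0 by (simp add: algebra_simps)
    finally show ?thesis using Esum unfolding t_def Q_def by simp
  next
    case False
    hence m5: "m \<ge> 5" using m4 by simp
    define B where "B j = 130 * real ((m - 1) choose j) + (if j = 1 then 2 * real m * t else 0)
       + (if j = 2 then 2 * real m * t + 24 * 2 ^ m else 0) + (if j = m - 2 then 65 * real m * t else 0)
       + (if j = m - 1 then 65 * t else 0)" for j
    have pwj: "Q ^ (m - 2) = Q ^ (m - 1 - j) * Q ^ (j - 1)" if "1 \<le> j" "j \<le> m - 1" for j
    proof -
      have "m - 2 = (m - 1 - j) + (j - 1)" using that m5 by simp
      thus ?thesis by (simp add: power_add)
    qed
    have Tle: "T j \<le> Q ^ (m - 2) * B j" if j: "j \<in> {1..m-1}" for j
    proof -
      have Bparts: "B j \<ge> 130 * real ((m - 1) choose j)" "B j \<ge> (if j = 1 then 2 * real m * t else 0)"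
        "B j \<ge> (if j = 2 then 2 * real m * t + 24 * 2 ^ m else 0)" "B j \<ge> (if j = m - 2 then 65 * real m * t else 0)"
        "B j \<ge> (if j = m - 1 then 65 * t else 0)"
        unfolding B_def using t0 by auto
      have Q0: "Q ^ (m - 2) \<ge> 0" using Q1 by simp
      consider "j = 1" | "j = 2" | "3 \<le> j \<and> j \<le> m - 3" | "j = m - 2" | "j = m - 1" using j m5 by force
      then show ?thesis
      proof cases
        case 1
        have "T j = real (m - 1) * sg q (m - 2) * t" unfolding T_def t_def using 1 by (simp add: numeral_2_eq_2)
        also have "\<dots> \<le> real (m - 1) * (2 * Q ^ (m - 2)) * t"
          using sgle[of "m - 2"] m5 t0 by (intro mult_right_mono mult_left_mono) auto
        also have "\<dots> \<le> Q ^ (m - 2) * (2 * real m * t)" using Q0 t0 m5 by (simp add: algebra_simps mult_right_mono)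
        also have "\<dots> \<le> Q ^ (m - 2) * B j" using Bparts(2) 1 Q0 by (simp add: mult_left_mono)
        finally show ?thesis .
      next
        case 2
        have cb: "real ((m - 1) choose 2) \<le> real m ^ 2"
        proof -
          have "(m - 1) choose 2 \<le> (m - 1) ^ 2" by (rule binomial_le_pow) (use m5 in simp)
          also have "\<dots> \<le> m ^ 2" by (simp add: power_mono)
          finally show ?thesis by (simp only: of_nat_le_iff of_nat_power[symmetric])
        qed
        have m2: "real m ^ 2 \<le> 2 ^ m"
        proof -
          have "real (m ^ 2) \<le> real (2 ^ m)" using sq_le[OF m4] by (simp only: of_nat_le_iff)
          thus ?thesis by simp
        qed
        have L: "real m ^ 2 * sg q 1 \<le> Q * (real m * t + 8 * 2 ^ m)" using L_lemma[OF q m4] unfolding t_def Q_def .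
        have M2: "Mq q 2 \<le> sg q 1 + 4 * Q" using Mq2 tt unfolding t_def by simp
        have M20: "Mq q 2 \<ge> 0" by (rule Mq_nonneg)
        have mm: "m - 2 = Suc (m - 3)" using m5 by simp
        have pw: "Q ^ (m - 2) = Q ^ (m - 3) * Q" unfolding mm by (rule power_Suc2)
        have "T j = real ((m - 1) choose 2) * sg q (m - 3) * Mq q 2" unfolding T_def using 2 by (simp add: numeral_3_eq_3 numeral_2_eq_2)
        also have "\<dots> \<le> real m ^ 2 * (2 * Q ^ (m - 3)) * (sg q 1 + 4 * Q)"
          using cb sgle[of "m - 3"] m5 M2 M20 sg_nonneg[of q "m-3"] Q1
          by (intro mult_mono) auto
        also have "\<dots> = 2 * Q ^ (m - 3) * (real m ^ 2 * sg q 1 + 4 * real m ^ 2 * Q)" by (simp add: algebra_simps)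
        also have "\<dots> \<le> 2 * Q ^ (m - 3) * (Q * (real m * t + 8 * 2 ^ m) + 4 * 2 ^ m * Q)"
          using L m2 Q1 by (intro mult_left_mono add_mono) auto
        also have "\<dots> = Q ^ (m - 2) * (2 * real m * t + 24 * 2 ^ m)" using pw by (simp add: algebra_simps)
        also have "\<dots> \<le> Q ^ (m - 2) * B j" using Bparts(3) 2 Q0 by (simp add: mult_left_mono)
        finally show ?thesis .
      next
        case 3
        have j1: "1 \<le> j" "j \<le> m - 1" using 3 m5 by auto
        have "T j \<le> real ((m - 1) choose j) * (2 * Q ^ (m - 1 - j)) * (65 * Q ^ (j - 1))"
          unfolding T_def using sgle[of "m - 1 - j"] Mbnd[of j] 3 m5 sg_nonneg[of q "m - 1 - j"] Mq_nonneg[of q j] Q1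
          by (intro mult_mono) auto
        also have "\<dots> = 130 * real ((m - 1) choose j) * Q ^ (m - 2)" using pwj[OF j1] by (simp add: algebra_simps)
        also have "\<dots> \<le> Q ^ (m - 2) * B j" using mult_left_mono[OF Bparts(1) Q0] by (simp add: mult_ac)
        finally show ?thesis .
      next
        case 4
        have c: "(m - 1) choose (m - 2) = m - 1"
        proof -
          have "(m - 1) choose (m - 2) = (m - 1) choose ((m - 1) - (m - 2))"
            by (rule binomial_symmetric) simp
          also have "(m - 1) - (m - 2) = 1" using m5 by simp
          finally show ?thesis by simp
        qed
        have e: "m - 1 - (m - 2) = 1" using m5 by simp
        have pw: "Q ^ (m - 2) = Q * Q ^ (m - 3)" using pwj[of "m - 2"] m5 e
          by (simp add: numeral_3_eq_3 numeral_2_eq_2)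
        have "T j = real (m - 1) * sg q 1 * Mq q (m - 2)" unfolding T_def using 4 c e by simp
        also have "\<dots> \<le> real (m - 1) * (Q * t) * (65 * Q ^ (m - 2 - 1))"
          using s1 Mbnd[of "m - 2"] m5 s10 Mq_nonneg[of q "m - 2"] Q1 t0 by (intro mult_mono) auto
        also have "\<dots> = 65 * real (m - 1) * t * (Q * Q ^ (m - 3))" by (simp add: algebra_simps numeral_3_eq_3)
        also have "\<dots> \<le> 65 * real m * t * (Q * Q ^ (m - 3))" using t0 Q1 by (intro mult_right_mono) auto
        also have "\<dots> = Q ^ (m - 2) * (65 * real m * t)" using pw by (simp add: algebra_simps)
        also have "\<dots> \<le> Q ^ (m - 2) * B j" using Bparts(4) 4 Q0 by (simp add: mult_left_mono)
        finally show ?thesis .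
      next
        case 5
        have "T j = t * Mq q (m - 1)" unfolding T_def t_def using 5 by simp
        also have "\<dots> \<le> t * (65 * Q ^ (m - 1 - 1))" using Mbnd[of "m - 1"] m5 t0 by (intro mult_left_mono) auto
        also have "\<dots> = Q ^ (m - 2) * (65 * t)" by (simp add: algebra_simps numeral_2_eq_2)
        also have "\<dots> \<le> Q ^ (m - 2) * B j" using Bparts(5) 5 Q0 by (simp add: mult_left_mono)
        finally show ?thesis .
      qed
    qed
    have sumC: "(\<Sum>j\<in>{1..m-1}. real ((m - 1) choose j)) \<le> 2 ^ (m - 1)"
    proof -
      have "(\<Sum>j\<in>{1..m-1}. real ((m - 1) choose j)) \<le> (\<Sum>j\<in>{..m-1}. real ((m - 1) choose j))"
        by (rule sum_mono2) auto
      also have "\<dots> = real (\<Sum>j\<le>m-1. (m - 1) choose j)" by simp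
      also have "\<dots> = 2 ^ (m - 1)" by (simp add: choose_row_sum)
      finally show ?thesis .
    qed
    have in1: "1 \<in> {1..m-1}" "2 \<in> {1..m-1}" "m - 2 \<in> {1..m-1}" "m - 1 \<in> {1..m-1}" using m5 by auto
    have sumB: "(\<Sum>j\<in>{1..m-1}. B j) = 130 * (\<Sum>j\<in>{1..m-1}. real ((m - 1) choose j)) + 2 * real m * t
       + (2 * real m * t + 24 * 2 ^ m) + 65 * real m * t + 65 * t"
      unfolding B_def using in1 by (simp add: sum.distrib sum_distrib_left)
    have p2: "(2::real) ^ m = 2 * 2 ^ (m - 1)"
    proof -
      have "(2::real) ^ m = 2 ^ (Suc (m - 1))" using m5 by simp
      also have "\<dots> = 2 * 2 ^ (m - 1)" by (rule power_Suc)
      finally show ?thesis .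
    qed
    have "(\<Sum>j\<in>{1..m-1}. T j) \<le> (\<Sum>j\<in>{1..m-1}. Q ^ (m - 2) * B j)" by (rule sum_mono) (rule Tle)
    also have "\<dots> = Q ^ (m - 2) * (\<Sum>j\<in>{1..m-1}. B j)" by (simp add: sum_distrib_left)
    also have "\<dots> \<le> Q ^ (m - 2) * (100 * (real m * t + 2 ^ m))"
    proof (rule mult_left_mono)
      have "65 * t \<le> 13 * real m * t" using m5 t0 by (simp add: mult_right_mono)
      thus "(\<Sum>j\<in>{1..m-1}. B j) \<le> 100 * (real m * t + 2 ^ m)" unfolding sumB using sumC p2 t0 by (simp only: mult.assoc) (smt (verit) zero_le_power mult_nonneg_nonneg of_nat_0_le_iff)
    qed (use Q1 in simp)
    finally show ?thesis using Esum unfolding t_def Q_def by (simp add: algebra_simps)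
  qed
qed



lemma fixmoment_eq:
  assumes "q > 0" "\<delta> * q \<le> n"
  shows "fixmoment n q \<delta> = Mq q \<delta>"
proof -
  have "(\<Sum>\<pi>\<in>{p. p permutes {..<n}}. real (c1 n (\<pi> ^^ q)) ^ \<delta>)
      = (\<Sum>\<pi>\<in>{p. p permutes {..<n}}. real (Xf q {..<n} \<pi>) ^ \<delta>)"
    unfolding c1_def Xf_def by simp
  also have "\<dots> = fact (card {..<n}) * Mq q \<delta>"
    by (rule moment[OF assms(1)]) (use assms(2) in auto)
  finally show ?thesis unfolding fixmoment_def by simp
qed

lemma sigma_eq:
  assumes "q > 0"
  shows "sigma (real m) q = sg q m"
  unfolding sigma_def sg_def
proof (rule sum.cong[OF refl])
  fix d assume "d \<in> {d. d dvd q}"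
  hence "d \<ge> 1" using divisors_sub[OF assms] by auto
  thus "real d powr real m = real d ^ m" by (simp add: powr_realpow)
qed

lemma E_nonneg: "m \<ge> 1 \<Longrightarrow> Mq q m - sg q (m - 1) \<ge> 0"
proof -
  assume m: "m \<ge> 1"
  have "(\<Sum>j\<in>{1..m-1}. real ((m - 1) choose j) * sg q (m - 1 - j) * Mq q j) \<ge> 0"
    by (rule sum_nonneg) (simp add: sg_nonneg Mq_nonneg)
  thus ?thesis using Mq_split[OF m, of q] by simp
qed

theorem lemma5p1:
  "\<exists>(q0::nat) (C::real). C > 0 \<and>
     (\<forall>(q::nat) (\<delta>::nat) (n::nat).
        q \<ge> q0 \<longrightarrow> \<delta> \<ge> 1 \<longrightarrow> real \<delta> \<le> ln (real q) / ln 2 \<longrightarrow> n \<ge> \<delta> * q \<longrightarrow>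
        (let A = fixmoment n q \<delta> in
          (\<delta> = 1 \<longrightarrow> A = sigma 0 q) \<and>
          (\<delta> = 2 \<longrightarrow> A = sigma 1 q + (sigma 0 q)\<^sup>2) \<and>
          (\<delta> = 3 \<longrightarrow> \<bar>A - sigma 2 q\<bar> \<le> C * sigma 0 q * sigma 1 q) \<and>
          (\<delta> \<ge> 4 \<longrightarrow> \<bar>A - sigma (real \<delta> - 1) q\<bar> \<le>
              C * real q ^ (\<delta> - 2) * (real \<delta> * sigma 0 q + 2 ^ \<delta>))))"
proof (rule exI[where x="65536::nat"], rule exI[where x="100::real"], intro conjI allI impI)
  show "(0::real) < 100" by simp
  fix q \<delta> n :: nat
  assume q0: "65536 \<le> q" and d1: "1 \<le> \<delta>" and dl: "real \<delta> \<le> ln (real q) / ln 2" and nq: "\<delta> * q \<le> n"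
  have q: "q > 0" using q0 by simp
  have A: "fixmoment n q \<delta> = Mq q \<delta>" by (rule fixmoment_eq[OF q nq])
  have s0: "sigma 0 q = sg q 0" using sigma_eq[OF q, of 0] by simp
  have s1: "sigma 1 q = sg q 1" using sigma_eq[OF q, of 1] by simp
  have s2: "sigma 2 q = sg q 2" using sigma_eq[OF q, of 2] by simp
  have pow2: "2 ^ \<delta> \<le> q"
  proof -
    have "real \<delta> * ln 2 \<le> ln (real q)" using dl by (simp add: pos_le_divide_eq)
    hence "ln (2 ^ \<delta>) \<le> ln (real q)" by (simp add: ln_realpow)
    moreover have "(0::real) < 2 ^ \<delta>" by simp
    moreover have "(0::real) < real q" using q by simp
    ultimately have "(2::real) ^ \<delta> \<le> real q" using ln_le_cancel_iff by blast
    hence "real (2 ^ \<delta>) \<le> real q" by simp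
    thus ?thesis by (simp only: of_nat_le_iff)
  qed
  have big: "256 * \<delta> ^ 2 \<le> q"
  proof (cases "\<delta> \<le> 16")
    case True
    have "\<delta> ^ 2 \<le> 16 ^ 2" using True by (rule power_mono) simp
    hence "256 * \<delta> ^ 2 \<le> 256 * 16 ^ 2" by (rule mult_left_mono) simp
    also have "(256::nat) * 16 ^ 2 = 65536" by simp
    finally show ?thesis using q0 by (rule order.trans)
  next
    case False
    hence "16 \<le> \<delta>" by simp
    hence "256 * \<delta> ^ 2 \<le> 2 ^ \<delta>" by (rule big_le)
    thus ?thesis using pow2 by (rule order.trans)
  qed
  define t where "t = sg q 0"
  have t0: "t \<ge> 0" unfolding t_def by (rule sg_nonneg)
  show "let A = fixmoment n q \<delta> in
          (\<delta> = 1 \<longrightarrow> A = sigma 0 q) \<and>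
          (\<delta> = 2 \<longrightarrow> A = sigma 1 q + (sigma 0 q)\<^sup>2) \<and>
          (\<delta> = 3 \<longrightarrow> \<bar>A - sigma 2 q\<bar> \<le> 100 * sigma 0 q * sigma 1 q) \<and>
          (\<delta> \<ge> 4 \<longrightarrow> \<bar>A - sigma (real \<delta> - 1) q\<bar> \<le>
              100 * real q ^ (\<delta> - 2) * (real \<delta> * sigma 0 q + 2 ^ \<delta>))"
    unfolding Let_def A
  proof (intro conjI impI)
    assume "\<delta> = 1" thus "Mq q \<delta> = sigma 0 q" using s0 by simp
  next
    assume "\<delta> = 2" thus "Mq q \<delta> = sigma 1 q + (sigma 0 q)\<^sup>2" using s0 s1 Mq2 by simp
  next
    assume d3: "\<delta> = 3"
    have tt: "t ^ 2 \<le> 4 * real q" using t_sq[OF q] unfolding t_def .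
    have sq1: "real q \<le> sg q 1" by (rule sg1_ge[OF q])
    have s10: "sg q 1 \<ge> 0" by (rule sg_nonneg)
    have "t ^ 3 = t * t ^ 2" by (simp add: power3_eq_cube power2_eq_square)
    also have "\<dots> \<le> t * (4 * sg q 1)" using tt sq1 t0 by (intro mult_left_mono) auto
    finally have c: "t ^ 3 \<le> 4 * (t * sg q 1)" by simp
    have ts: "t * sg q 1 \<ge> 0" using t0 s10 by simp
    have "Mq q 3 - sg q 2 = 3 * (t * sg q 1) + t ^ 3" using Mq3 unfolding t_def by (simp add: algebra_simps)
    moreover have "3 * (t * sg q 1) + t ^ 3 \<ge> 0" using ts t0 by simp
    ultimately have "\<bar>Mq q 3 - sg q 2\<bar> \<le> 100 * (t * sg q 1)" using c ts by linarith
    thus "\<bar>Mq q \<delta> - sigma 2 q\<bar> \<le> 100 * sigma 0 q * sigma 1 q"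
      using d3 s0 s1 s2 unfolding t_def by (simp add: mult.assoc)
  next
    assume d4: "4 \<le> \<delta>"
    have sd: "sigma (real \<delta> - 1) q = sg q (\<delta> - 1)"
    proof -
      have r: "real \<delta> - 1 = real (\<delta> - 1)" using d1 by (simp add: of_nat_diff)
      show ?thesis unfolding r by (rule sigma_eq[OF q])
    qed
    have b: "Mq q \<delta> - sg q (\<delta> - 1) \<le> 100 * real q ^ (\<delta> - 2) * (real \<delta> * sg q 0 + 2 ^ \<delta>)"
      by (rule E_bound[OF q d4 pow2 big])
    have ab: "\<bar>Mq q \<delta> - sg q (\<delta> - 1)\<bar> = Mq q \<delta> - sg q (\<delta> - 1)"
      by (rule abs_of_nonneg[OF E_nonneg[OF d1]])
    show "\<bar>Mq q \<delta> - sigma (real \<delta> - 1) q\<bar> \<le>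
              100 * real q ^ (\<delta> - 2) * (real \<delta> * sigma 0 q + 2 ^ \<delta>)"
      unfolding sd s0 ab by (rule b)
  qed
qed

end
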